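(* Let $k\in\{2,3\}$ and let $D$ be an $m$-colored semicomplete bipartite digraph such that every subdigraph of $D$ isomorphic to $\overrightarrow{C}_4\upuparrows\overrightarrow{C}_4$ is at most $k$-colored. Let $x,y$ be distinct vertices of $D$. If there exists a directed path from $x$ to $y$ using exactly $k$ colors and there is no directed path from $y$ to $x$ using at most $k$ colors, then $d(x,y)\leq 2$.
   Context: A semicomplete bipartite digraph is a digraph whose vertex set is partitioned into two nonempty independent sets such that for any two vertices $u,v$ in different parts at least one of the arcs $(u,v)$, $(v,u)$ is present (both may be present). An $m$-colored digraph is a digraph whose arcs are each assigned one of $m$ colors. A directed path (no repeated vertices) is $j$-colored if its arcs use exactly $j$ distinct colors; it uses at most $k$ colors if it is $j$-colored for some $1\le j\le k$. A subdigraph is at most $k$-colored if its arcs use at most $k$ colors. $\overrightarrow{C}_4\upuparrows\overrightarrow{C}_4$ denotes the digraph on five distinct vertices $a,b,c,d,e$ with arcs $a\to b$, $b\to c$, $c\to d$, $d\to a$, $c\to e$, $e\to a$, i.e. two directed $4$-cycles $(a,b,c,d,a)$ and $(a,b,c,e,a)$ sharing the directed path $a\to b\to c$. $d(x,y)$ denotes the minimum number of arcs of a directed path from $x$ to $y$. *)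

theory Defs
  imports Main
begin

text \<open>A digraph is given by a vertex set V and an arc set A \<subseteq> V \<times> V (loopless).
  An m-coloured digraph additionally has a colouring col of arcs with colours in {1..m}.\<close>

definition semicomplete_bipartite :: "'a set \<Rightarrow> ('a \<times> 'a) set \<Rightarrow> bool" where
  "semicomplete_bipartite V A \<longleftrightarrow>
     A \<subseteq> V \<times> V \<and>
     (\<exists>X Y. X \<noteq> {} \<and> Y \<noteq> {} \<and> X \<inter> Y = {} \<and> X \<union> Y = V \<and>
        (\<forall>u\<in>X. \<forall>v\<in>X. (u, v) \<notin> A) \<and>
        (\<forall>u\<in>Y. \<forall>v\<in>Y. (u, v) \<notin> A) \<and>
        (\<forall>u\<in>X. \<forall>v\<in>Y. (u, v) \<in> A \<or> (v, u) \<in> A))"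

definition dpath :: "('a \<times> 'a) set \<Rightarrow> 'a list \<Rightarrow> bool" where
  "dpath A p \<longleftrightarrow> length p \<ge> 2 \<and> distinct p \<and>
     (\<forall>i. Suc i < length p \<longrightarrow> (p ! i, p ! Suc i) \<in> A)"

definition dpath_from_to :: "('a \<times> 'a) set \<Rightarrow> 'a list \<Rightarrow> 'a \<Rightarrow> 'a \<Rightarrow> bool" where
  "dpath_from_to A p x y \<longleftrightarrow> dpath A p \<and> hd p = x \<and> last p = y"

definition path_colors :: "('a \<times> 'a \<Rightarrow> 'c) \<Rightarrow> 'a list \<Rightarrow> 'c set" where
  "path_colors col p = {col (p ! i, p ! Suc i) | i. Suc i < length p}"

definition ddist :: "('a \<times> 'a) set \<Rightarrow> 'a \<Rightarrow> 'a \<Rightarrow> nat" where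
  "ddist A x y = (LEAST n. \<exists>p. dpath_from_to A p x y \<and> length p = Suc n)"

text \<open>Every subdigraph isomorphic to C4 upuparrows C4 (five distinct vertices a,b,c,d,e,
  arcs a->b, b->c, c->d, d->a, c->e, e->a) uses at most k colours.\<close>
definition C4C4_at_most_colored :: "('a \<times> 'a) set \<Rightarrow> ('a \<times> 'a \<Rightarrow> 'c) \<Rightarrow> nat \<Rightarrow> bool" where
  "C4C4_at_most_colored A col k \<longleftrightarrow>
     (\<forall>a b c d e. distinct [a, b, c, d, e] \<and>
        (a, b) \<in> A \<and> (b, c) \<in> A \<and> (c, d) \<in> A \<and> (d, a) \<in> A \<and> (c, e) \<in> A \<and> (e, a) \<in> A
        \<longrightarrow> card (col ` {(a, b), (b, c), (c, d), (d, a), (c, e), (e, a)}) \<le> k)"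

end

theory Submission
  imports Defs
begin

lemma chain_CC:
  "(\<forall>i. Suc i < length (a#b#r) \<longrightarrow> ((a#b#r) ! i, (a#b#r) ! Suc i) \<in> A) \<longleftrightarrow>
   (a,b) \<in> A \<and> (\<forall>i. Suc i < length (b#r) \<longrightarrow> ((b#r) ! i, (b#r) ! Suc i) \<in> A)"
  (is "?L \<longleftrightarrow> ?R")
proof
  assume L: ?L
  show ?R
  proof (intro conjI allI impI)
    show "(a,b) \<in> A" using L[rule_format, of 0] by simp
    fix i assume "Suc i < length (b#r)"
    then show "((b#r) ! i, (b#r) ! Suc i) \<in> A" using L[rule_format, of "Suc i"] by simp
  qed
next
  assume R: ?R
  show ?L
  proof (intro allI impI)
    fix i assume i: "Suc i < length (a#b#r)"
    show "((a#b#r) ! i, (a#b#r) ! Suc i) \<in> A"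
    proof (cases i)
      case 0 then show ?thesis using R by simp
    next
      case (Suc j) then show ?thesis using R i by auto
    qed
  qed
qed

lemma chain_single: "(\<forall>i. Suc i < length [a] \<longrightarrow> P i) = True" by simp

lemma pc_CC: "path_colors col (a#b#r) = insert (col (a,b)) (path_colors col (b#r))"
  unfolding path_colors_def
proof (intro equalityI subsetI)
  fix c assume "c \<in> {col ((a # b # r) ! i, (a # b # r) ! Suc i) |i. Suc i < length (a # b # r)}"
  then obtain i where i: "Suc i < length (a#b#r)" "c = col ((a # b # r) ! i, (a # b # r) ! Suc i)" by blast
  show "c \<in> insert (col (a, b)) {col ((b # r) ! i, (b # r) ! Suc i) |i. Suc i < length (b # r)}"
  proof (cases i)
    case 0 then show ?thesis using i by simp
  next
    case (Suc j) then show ?thesis using i by auto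
  qed
next
  fix c assume "c \<in> insert (col (a, b)) {col ((b # r) ! i, (b # r) ! Suc i) |i. Suc i < length (b # r)}"
  then show "c \<in> {col ((a # b # r) ! i, (a # b # r) ! Suc i) |i. Suc i < length (a # b # r)}"
  proof
    assume "c = col (a,b)" then show ?thesis by (intro CollectI exI[of _ 0]) auto
  next
    assume "c \<in> {col ((b # r) ! i, (b # r) ! Suc i) |i. Suc i < length (b # r)}"
    then obtain i where "Suc i < length (b#r)" "c = col ((b # r) ! i, (b # r) ! Suc i)" by blast
    then show ?thesis by (intro CollectI exI[of _ "Suc i"]) auto
  qed
qed

lemma pc_single: "path_colors col [a] = {}" unfolding path_colors_def by simp

lemma ddist_le:
  assumes "dpath_from_to A p x y"
  shows "ddist A x y \<le> length p - 1"
proof -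
  have "length p \<ge> 2" using assms by (simp add: dpath_from_to_def dpath_def)
  then have "length p = Suc (length p - 1)" by simp
  then have "\<exists>q. dpath_from_to A q x y \<and> length q = Suc (length p - 1)" using assms by blast
  then show ?thesis unfolding ddist_def by (rule Least_le)
qed

lemma core:
  fixes col :: "'a \<times> 'a \<Rightarrow> nat"
  assumes AV: "A \<subseteq> V \<times> V" and disj: "X \<inter> Y = {}" and un: "X \<union> Y = V"
    and nX: "\<forall>u\<in>X. \<forall>v\<in>X. (u, v) \<notin> A"
    and nY: "\<forall>u\<in>Y. \<forall>v\<in>Y. (u, v) \<notin> A"
    and sc: "\<forall>u\<in>X. \<forall>v\<in>Y. (u, v) \<in> A \<or> (v, u) \<in> A"
    and k2: "k \<ge> 2"
    and C4: "C4C4_at_most_colored A col k"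
    and xX: "x \<in> X" and yX: "y \<in> X" and xy: "x \<noteq> y"
    and P: "dpath_from_to A p x y"
    and noq: "\<not> (\<exists>q. dpath_from_to A q y x \<and> card (path_colors col q) \<le> k)"
  shows "\<exists>z. (x,z) \<in> A \<and> (z,y) \<in> A"
proof (rule ccontr)
  assume nz: "\<not> (\<exists>z. (x,z) \<in> A \<and> (z,y) \<in> A)"
  have no2: False if "(y,z) \<in> A" "(z,x) \<in> A" for z
  proof -
    have "z \<noteq> y" using that(1) nX nY un yX by blast
    moreover have "z \<noteq> x" using that(2) nX xX by blast
    ultimately have "dpath_from_to A [y,z,x] y x"
      using that xy by (auto simp: dpath_from_to_def dpath_def less_Suc_eq)
    moreover have "card (path_colors col [y,z,x]) \<le> k"
    proof -
      have "card (path_colors col [y,z,x]) \<le> 2"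
        by (simp add: pc_CC pc_single card_insert_le_m1)
      then show ?thesis using k2 by simp
    qed
    ultimately show False using noq by blast
  qed
  have Y1: "(y,z) \<in> A \<and> (z,y) \<notin> A" if "z \<in> Y" "(x,z) \<in> A" for z
    using that nz sc yX by blast
  have Y2: "(z,x) \<in> A \<and> (z,y) \<in> A" if "z \<in> Y" "(x,z) \<notin> A" for z
    using that sc xX yX no2 by blast
  have pd: "distinct p" and pl: "length p \<ge> 2"
    and pa: "\<And>i. Suc i < length p \<Longrightarrow> (p ! i, p ! Suc i) \<in> A"
    and p0: "p ! 0 = x" and pn: "p ! (length p - 1) = y"
  proof -
    have "p \<noteq> []" using P by (auto simp: dpath_from_to_def dpath_def)
    then show "distinct p" "length p \<ge> 2" "\<And>i. Suc i < length p \<Longrightarrow> (p ! i, p ! Suc i) \<in> A"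
      "p ! 0 = x" "p ! (length p - 1) = y"
      using P by (auto simp: dpath_from_to_def dpath_def hd_conv_nth last_conv_nth)
  qed
  have inV: "p ! j \<in> V" if "j < length p" for j
  proof (cases "Suc j < length p")
    case True then show ?thesis using pa[OF True] AV by auto
  next
    case False
    then have "j = length p - 1" using that by simp
    then show ?thesis using pn yX un by auto
  qed
  have nextY: "p ! Suc j \<in> Y" if "Suc j < length p" "p ! j \<in> X" for j
    using pa[OF that(1)] that inV[OF that(1)] nX un by blast
  have nextX: "p ! Suc j \<in> X" if "Suc j < length p" "p ! j \<in> Y" for j
    using pa[OF that(1)] that inV[OF that(1)] nY un by blast
  define S where "S = {i. i < length p \<and> p ! i \<in> Y \<and> (x, p ! i) \<in> A}"
  have fS: "finite S" unfolding S_def by simp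
  have "1 \<in> S"
  proof -
    have "Suc 0 < length p" using pl by simp
    then show ?thesis using nextY[of 0] pa[of 0] p0 xX unfolding S_def by auto
  qed
  define i where "i = Max S"
  have iS: "i \<in> S" unfolding i_def using fS \<open>1 \<in> S\<close> by (intro Max_in) auto
  have imax: "j \<le> i" if "j \<in> S" for j unfolding i_def using fS that by simp
  have il: "i < length p" and aY: "p ! i \<in> Y" and xa: "(x, p ! i) \<in> A" using iS S_def by auto
  have "i \<noteq> length p - 1" using aY pn yX disj by auto
  then have i1: "Suc i < length p" using il by simp
  have bX: "p ! Suc i \<in> X" using nextX[OF i1 aY] .
  have ab: "(p ! i, p ! Suc i) \<in> A" using pa[OF i1] .
  have "p ! Suc i \<noteq> y" using Y1[OF aY xa] ab by auto
  then have "Suc i \<noteq> length p - 1" using pn by auto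
  then have i2: "Suc (Suc i) < length p" using i1 by simp
  have cY: "p ! Suc (Suc i) \<in> Y" using nextY[OF i2 bX] .
  have bc: "(p ! Suc i, p ! Suc (Suc i)) \<in> A" using pa[OF i2] .
  have "Suc (Suc i) \<notin> S" using imax by fastforce
  then have "(x, p ! Suc (Suc i)) \<notin> A" using i2 cY S_def by auto
  then have cx: "(p ! Suc (Suc i), x) \<in> A" and cy: "(p ! Suc (Suc i), y) \<in> A"
    using Y2[OF cY] by auto
  have ya: "(y, p ! i) \<in> A" using Y1[OF aY xa] by simp
  define a where "a = p ! i"
  define b where "b = p ! Suc i"
  define c where "c = p ! Suc (Suc i)"
  have d_ab: "a \<noteq> b" "a \<noteq> c" "b \<noteq> c"
    unfolding a_def b_def c_def using pd i2 by (auto simp: nth_eq_iff_index_eq)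
  have "b \<noteq> x"
  proof
    assume "b = x"
    then have "p ! Suc i = p ! 0" using p0 b_def by simp
    moreover have "Suc i < length p" "0 < length p" using i2 by auto
    ultimately show False using nth_eq_iff_index_eq[OF pd] by fastforce
  qed
  moreover have "b \<noteq> y" unfolding b_def by fact
  moreover have "a \<noteq> x" "a \<noteq> y" "c \<noteq> x" "c \<noteq> y"
    unfolding a_def c_def using aY cY xX yX disj by auto
  ultimately have dist: "distinct [a,b,c,x,y]" using d_ab xy by auto
  have card6: "card (col ` {(a, b), (b, c), (c, x), (x, a), (c, y), (y, a)}) \<le> k"
    using C4 dist ab bc cx xa cy ya unfolding C4C4_at_most_colored_def a_def b_def c_def
    by blast
  have "dpath_from_to A [y,a,b,c,x] y x"
    using dist ya ab bc cx unfolding a_def[symmetric] b_def[symmetric] c_def[symmetric]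
    by (auto simp: dpath_from_to_def dpath_def less_Suc_eq)
  moreover have "card (path_colors col [y,a,b,c,x]) \<le> k"
  proof -
    have "path_colors col [y,a,b,c,x] \<subseteq> col ` {(a, b), (b, c), (c, x), (x, a), (c, y), (y, a)}"
      by (simp add: pc_CC pc_single)
    then have "card (path_colors col [y,a,b,c,x]) \<le> card (col ` {(a, b), (b, c), (c, x), (x, a), (c, y), (y, a)})"
      by (intro card_mono) auto
    then show ?thesis using card6 by simp
  qed
  ultimately show False using noq by blast
qed

theorem mainTheorem5:
  fixes V :: "'a set" and A :: "('a \<times> 'a) set" and col :: "'a \<times> 'a \<Rightarrow> nat"
    and m k :: nat and x y :: 'a
  assumes "finite V"
    and "semicomplete_bipartite V A"
    and "col ` A \<subseteq> {1..m}"
    and "k \<in> {2, 3}"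
    and "C4C4_at_most_colored A col k"
    and "x \<in> V" and "y \<in> V" and "x \<noteq> y"
    and "\<exists>p. dpath_from_to A p x y \<and> card (path_colors col p) = k"
    and "\<not> (\<exists>q. dpath_from_to A q y x \<and> card (path_colors col q) \<le> k)"
  shows "ddist A x y \<le> 2"
proof -
  obtain X Y where AV: "A \<subseteq> V \<times> V" and ne: "X \<noteq> {}" "Y \<noteq> {}" and disj: "X \<inter> Y = {}"
    and un: "X \<union> Y = V" and nX: "\<forall>u\<in>X. \<forall>v\<in>X. (u, v) \<notin> A"
    and nY: "\<forall>u\<in>Y. \<forall>v\<in>Y. (u, v) \<notin> A"
    and sc: "\<forall>u\<in>X. \<forall>v\<in>Y. (u, v) \<in> A \<or> (v, u) \<in> A"
    using assms(2) unfolding semicomplete_bipartite_def by blast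
  have sc': "\<forall>u\<in>Y. \<forall>v\<in>X. (u, v) \<in> A \<or> (v, u) \<in> A" using sc by blast
  have k2: "k \<ge> 2" using assms(4) by auto
  obtain p where P: "dpath_from_to A p x y" using assms(9) by blast
  have noloop: "(v,v) \<notin> A" if "v \<in> V" for v using that un nX nY by blast
  have two: "ddist A x y \<le> 2" if "(x,z) \<in> A" "(z,y) \<in> A" for z
  proof -
    have "z \<noteq> x" "z \<noteq> y" using that noloop AV by auto
    then have "dpath_from_to A [x,z,y] x y" using that assms(8)
      by (auto simp: dpath_from_to_def dpath_def less_Suc_eq)
    from ddist_le[OF this] show ?thesis by simp
  qed
  show ?thesis
  proof (cases "(x \<in> X \<and> y \<in> X) \<or> (x \<in> Y \<and> y \<in> Y)")
    case True
    then show ?thesis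
    proof
      assume "x \<in> X \<and> y \<in> X"
      then obtain z where "(x,z) \<in> A" "(z,y) \<in> A"
        using core[OF AV disj un nX nY sc k2 assms(5) _ _ assms(8) P assms(10)] by blast
      then show ?thesis using two by blast
    next
      assume "x \<in> Y \<and> y \<in> Y"
      then obtain z where "(x,z) \<in> A" "(z,y) \<in> A"
        using core[OF AV _ _ nY nX sc' k2 assms(5) _ _ assms(8) P assms(10)] disj un by blast
      then show ?thesis using two by blast
    qed
  next
    case False
    then have "(x,y) \<in> A \<or> (y,x) \<in> A" using sc assms(6,7) un by blast
    moreover have "(y,x) \<notin> A"
    proof
      assume yx: "(y,x) \<in> A"
      then have "dpath_from_to A [y,x] y x" using assms(8)
        by (auto simp: dpath_from_to_def dpath_def less_Suc_eq)
      moreover have "card (path_colors col [y,x]) \<le> k" using k2 by (simp add: pc_CC pc_single)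
      ultimately show False using assms(10) by blast
    qed
    ultimately have "(x,y) \<in> A" by blast
    then have "dpath_from_to A [x,y] x y" using assms(8)
      by (auto simp: dpath_from_to_def dpath_def less_Suc_eq)
    from ddist_le[OF this] show ?thesis by simp
  qed
qed

end
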